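(* Let $(\mathcal G,\Theta=[\cdot,\cdot,\cdot]_{\mathcal G})$ be a Lie triple system with $\mathcal G=\mathfrak g_1\oplus\mathfrak g_2$, let $H:\mathfrak g_2\to\mathfrak g_1$ be linear, and suppose both $((\mathcal G,\Theta),\mathfrak g_1,\mathfrak g_2)$ and its twisting $((\mathcal G,\Theta^H),\mathfrak g_1,\mathfrak g_2)$ are twilled Lie triple systems. Then $$[u,v,w]_H:=[u,v,w]_2+[H(u),v,w]_2+[u,H(v),w]_2+[u,v,H(w)]_2+[H(u),H(v),w]_2+[u,H(v),H(w)]_2+[H(u),v,H(w)]_2$$ for $u,v,w\in\mathfrak g_2$ defines a Lie triple system structure on $\mathfrak g_2$, where $[a,b,c]_2$ is the $\mathfrak g_2$-component of $[a,b,c]_{\mathcal G}$.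
   Context: All vector spaces are over a field of characteristic $0$. A Lie triple system is a vector space with a trilinear bracket satisfying $[x,x,y]=0$, $[x,y,z]+[y,z,x]+[z,x,y]=0$ and $[x,y,[z,w,t]]=[[x,y,z],w,t]+[z,[x,y,w],t]+[z,w,[x,y,t]]$. A twilled Lie triple system $((\mathcal G,\Theta),\mathfrak g_1,\mathfrak g_2)$ is a Lie triple system on $\mathcal G=\mathfrak g_1\oplus\mathfrak g_2$ for which $\mathfrak g_1$ and $\mathfrak g_2$ are subalgebras (closed under the bracket). Cochains: $C^p(\mathcal G,\mathcal G)=\mathrm{Hom}(\otimes^{2p+1}\mathcal G,\mathcal G)$, arguments $(\mathfrak X_1,\dots,\mathfrak X_p,x)$, $\mathfrak X_i=x_i\otimes y_i$; for $P\in C^p,Q\in C^q$, $(P\circ Q)(\mathfrak X_1,\dots,\mathfrak X_{p+q},x)=\sum_{k=1}^p(-1)^{(k-1)q}\sum_{\sigma\in\mathbb S(k-1,q)}(-1)^\sigma P(\mathfrak X_{\sigma(1)},\dots,\mathfrak X_{\sigma(k-1)},Q(\mathfrak X_{\sigma(k)},\dots,\mathfrak X_{\sigma(k+q-1)},x_{k+q})\otimes y_{k+q},\mathfrak X_{k+q+1},\dots,x)+\sum_{k=1}^p(-1)^{(k-1)q}\sum_{\sigma\in\mathbb S(k-1,q)}(-1)^\sigma P(\mathfrak X_{\sigma(1)},\dots,\mathfrak X_{\sigma(k-1)},x_{k+q}\otimes Q(\mathfrak X_{\sigma(k)},\dots,\mathfrak X_{\sigma(k+q-1)},y_{k+q}),\mathfrak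 X_{k+q+1},\dots,x)+\sum_{\sigma\in\mathbb S(p,q)}(-1)^\sigma P(\mathfrak X_{\sigma(1)},\dots,\mathfrak X_{\sigma(p)},Q(\mathfrak X_{\sigma(p+1)},\dots,\mathfrak X_{\sigma(p+q)},x))$ and $[P,Q]_{\mathsf{LTS}}=P\circ Q-(-1)^{pq}Q\circ P$. $\hat H(x,u)=(H(u),0)$, $X_{\hat H}(\cdot)=[\cdot,\hat H]_{\mathsf{LTS}}$, and the twisting is $\Theta^H=\sum_{k\ge0}\frac1{k!}X_{\hat H}^k(\Theta)$ (finite sum), again a Lie triple system bracket on $\mathcal G$. *)

theory Defs
  imports Complex_Main "HOL-Library.Product_Plus"
begin

text \<open>The ambient
  space G = g1 (+) g2 is the product type 'a \<times> 'b, with g1 = 'a \<times> {0} and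
  g2 = {0} \<times> 'b.\<close>

definition prod_scale :: "('k \<Rightarrow> 'a \<Rightarrow> 'a) \<Rightarrow> ('k \<Rightarrow> 'b \<Rightarrow> 'b) \<Rightarrow> 'k \<Rightarrow> 'a \<times> 'b \<Rightarrow> 'a \<times> 'b"
  where "prod_scale s1 s2 c p = (s1 c (fst p), s2 c (snd p))"

definition trilinear :: "('k::field \<Rightarrow> 'v::ab_group_add \<Rightarrow> 'v) \<Rightarrow> ('v \<Rightarrow> 'v \<Rightarrow> 'v \<Rightarrow> 'v) \<Rightarrow> bool"
  where "trilinear s T \<longleftrightarrow>
    (\<forall>y z. Vector_Spaces.linear s s (\<lambda>x. T x y z)) \<and>
    (\<forall>x z. Vector_Spaces.linear s s (\<lambda>y. T x y z)) \<and>
    (\<forall>x y. Vector_Spaces.linear s s (\<lambda>z. T x y z))"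

definition lie_triple_system :: "('k::field \<Rightarrow> 'v::ab_group_add \<Rightarrow> 'v) \<Rightarrow> ('v \<Rightarrow> 'v \<Rightarrow> 'v \<Rightarrow> 'v) \<Rightarrow> bool"
  where "lie_triple_system s T \<longleftrightarrow>
    vector_space s \<and> trilinear s T \<and>
    (\<forall>x y. T x x y = 0) \<and>
    (\<forall>x y z. T x y z + T y z x + T z x y = 0) \<and>
    (\<forall>x y z w t. T x y (T z w t) = T (T x y z) w t + T z (T x y w) t + T z w (T x y t))"

definition twilled :: "('k::field \<Rightarrow> 'a::ab_group_add \<Rightarrow> 'a) \<Rightarrow> ('k \<Rightarrow> 'b::ab_group_add \<Rightarrow> 'b)
     \<Rightarrow> ('a \<times> 'b \<Rightarrow> 'a \<times> 'b \<Rightarrow> 'a \<times> 'b \<Rightarrow> 'a \<times> 'b) \<Rightarrow> bool"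
  where "twilled s1 s2 T \<longleftrightarrow>
    lie_triple_system (prod_scale s1 s2) T \<and>
    (\<forall>x y z. snd (T (x, 0) (y, 0) (z, 0)) = 0) \<and>
    (\<forall>u v w. fst (T (0, u) (0, v) (0, w)) = 0)"

definition hatH :: "('b::zero \<Rightarrow> 'a) \<Rightarrow> 'a \<times> 'b \<Rightarrow> 'a \<times> 'b"
  where "hatH H p = (H (snd p), 0)"

text \<open>The composition P o Q of the LTS cochain complex, specialised to
  P \<in> C^1 (arguments (x1 \<otimes> y1, x)) and Q \<in> C^0, and to P \<in> C^0, Q \<in> C^1.\<close>
definition circ_1_0 :: "('g \<Rightarrow> 'g \<Rightarrow> 'g \<Rightarrow> 'g::plus) \<Rightarrow> ('g \<Rightarrow> 'g) \<Rightarrow> 'g \<Rightarrow> 'g \<Rightarrow> 'g \<Rightarrow> 'g"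
  where "circ_1_0 P Q x1 y1 x = P (Q x1) y1 x + P x1 (Q y1) x + P x1 y1 (Q x)"

definition circ_0_1 :: "('g \<Rightarrow> 'g) \<Rightarrow> ('g \<Rightarrow> 'g \<Rightarrow> 'g \<Rightarrow> 'g) \<Rightarrow> 'g \<Rightarrow> 'g \<Rightarrow> 'g \<Rightarrow> 'g"
  where "circ_0_1 Q P x1 y1 x = Q (P x1 y1 x)"

text \<open>[P,Q]_LTS = P o Q - (-1)^(p q) Q o P with p = 1, q = 0.\<close>
definition lts_bracket_1_0 :: "('g \<Rightarrow> 'g \<Rightarrow> 'g \<Rightarrow> 'g::{plus,minus}) \<Rightarrow> ('g \<Rightarrow> 'g) \<Rightarrow> 'g \<Rightarrow> 'g \<Rightarrow> 'g \<Rightarrow> 'g"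
  where "lts_bracket_1_0 P Q x1 y1 x = circ_1_0 P Q x1 y1 x - circ_0_1 Q P x1 y1 x"

definition XH :: "('b::ab_group_add \<Rightarrow> 'a::ab_group_add) \<Rightarrow> ('a \<times> 'b \<Rightarrow> 'a \<times> 'b \<Rightarrow> 'a \<times> 'b \<Rightarrow> 'a \<times> 'b)
     \<Rightarrow> ('a \<times> 'b \<Rightarrow> 'a \<times> 'b \<Rightarrow> 'a \<times> 'b \<Rightarrow> 'a \<times> 'b)"
  where "XH H P = lts_bracket_1_0 P (hatH H)"

text \<open>Twisting Theta^H = sum_{k>=0} 1/k! X^k(Theta); the sum is finite, and we sum up
  to the least N with X^N(Theta) = 0 (all higher powers vanish then too).\<close>
definition twist :: "('k::field_char_0 \<Rightarrow> 'a::ab_group_add \<Rightarrow> 'a) \<Rightarrow> ('k \<Rightarrow> 'b::ab_group_add \<Rightarrow> 'b)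
     \<Rightarrow> ('b \<Rightarrow> 'a) \<Rightarrow> ('a \<times> 'b \<Rightarrow> 'a \<times> 'b \<Rightarrow> 'a \<times> 'b \<Rightarrow> 'a \<times> 'b)
     \<Rightarrow> 'a \<times> 'b \<Rightarrow> 'a \<times> 'b \<Rightarrow> 'a \<times> 'b \<Rightarrow> 'a \<times> 'b"
  where "twist s1 s2 H T a b c =
    (let N = (LEAST n. (XH H ^^ n) T = (\<lambda>_ _ _. 0))
     in \<Sum>k<N. prod_scale s1 s2 (inverse (of_nat (fact k))) ((XH H ^^ k) T a b c))"

definition bracket_H :: "('a::zero \<times> 'b::{zero,plus} \<Rightarrow> 'a \<times> 'b \<Rightarrow> 'a \<times> 'b \<Rightarrow> 'a \<times> 'b) \<Rightarrow> ('b \<Rightarrow> 'a)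
     \<Rightarrow> 'b \<Rightarrow> 'b \<Rightarrow> 'b \<Rightarrow> 'b"
  where "bracket_H T H u v w =
      snd (T (0, u) (0, v) (0, w))
    + snd (T (H u, 0) (0, v) (0, w))
    + snd (T (0, u) (H v, 0) (0, w))
    + snd (T (0, u) (0, v) (H w, 0))
    + snd (T (H u, 0) (H v, 0) (0, w))
    + snd (T (0, u) (H v, 0) (H w, 0))
    + snd (T (H u, 0) (0, v) (H w, 0))"

end

theory Submission imports Defs begin

locale twd =
  fixes T :: "'a::ab_group_add \<times> 'b::ab_group_add \<Rightarrow> 'a \<times> 'b \<Rightarrow> 'a \<times> 'b \<Rightarrow> 'a \<times> 'b"
    and H :: "'b \<Rightarrow> 'a"
  assumes T1: "\<And>x y b c. T (x + y) b c = T x b c + T y b c"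
    and T2: "\<And>x y a c. T a (x + y) c = T a x c + T a y c"
    and T3: "\<And>x y a b. T a b (x + y) = T a b x + T a b y"
    and HA: "\<And>x y. H (x + y) = H x + H y"
    and G1: "\<And>x y z. snd (T (x, 0) (y, 0) (z, 0)) = 0"
begin

lemma H0[simp]: "H 0 = 0" using HA[of 0 0] by simp
lemma Hdiff: "H (x - y) = H x - H y"
  by (metis HA add_diff_cancel diff_add_cancel eq_diff_eq)
lemma T01[simp]: "T 0 b c = 0" using T1[where x=0 and y=0 and b=b and c=c] by simp
lemma T02[simp]: "T a 0 c = 0" using T2[where x=0 and y=0 and a=a and c=c] by simp
lemma T03[simp]: "T a b 0 = 0" using T3[where x=0 and y=0 and a=a and b=b] by simp

abbreviation E where "E \<equiv> hatH H"
lemma E_add[simp]: "E (x + y) = E x + E y" by (simp add: hatH_def HA)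
lemma E_diff[simp]: "E (x - y) = E x - E y" by (simp add: hatH_def Hdiff)
lemma E_neg[simp]: "E (- x) = - E x" by (metis E_diff diff_0 diff_self)
lemma E_0[simp]: "E 0 = 0" by (simp add: hatH_def zero_prod_def)
lemma E_E[simp]: "E (E x) = 0" by (simp add: hatH_def zero_prod_def)
lemma snd_E[simp]: "snd (E x) = 0" by (simp add: hatH_def)
lemma E_pair[simp]: "E (x, y) = (H y, 0)" by (simp add: hatH_def)

lemma X_unfold: "XH H P a b c = P (E a) b c + P a (E b) c + P a b (E c) - E (P a b c)"
  by (simp add: XH_def lts_bracket_1_0_def circ_1_0_def circ_0_1_def)

lemma snd_X: "snd (XH H P a b c) = snd (P (E a) b c) + snd (P a (E b) c) + snd (P a b (E c))"
  by (simp add: X_unfold)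

lemma Xk1[simp]: "(XH H ^^ k) T 0 b c = 0"
  by (induction k arbitrary: b c) (simp_all add: X_unfold)
lemma Xk2[simp]: "(XH H ^^ k) T a 0 c = 0"
  by (induction k arbitrary: a c) (simp_all add: X_unfold)
lemma Xk3[simp]: "(XH H ^^ k) T a b 0 = 0"
  by (induction k arbitrary: a b) (simp_all add: X_unfold)

lemma X5: "(XH H ^^ 5) T = (\<lambda>_ _ _. 0)"
  by (intro ext) (simp add: numeral_eq_Suc X_unfold)

lemma X_zero: "XH H (\<lambda>_ _ _. 0) = (\<lambda>_ _ _. 0)"
  by (intro ext) (simp add: X_unfold)


lemma T001[simp]: "T (0,0) b c = 0" by (metis T01 zero_prod_def)
lemma T002[simp]: "T a (0,0) c = 0" by (metis T02 zero_prod_def)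
lemma T003[simp]: "T a b (0,0) = 0" by (metis T03 zero_prod_def)
lemma sX0: "snd ((XH H ^^ 0) T (0,u) (0,v) (0,w)) = snd (T (0,u) (0,v) (0,w))" by simp
lemma sX1: "snd ((XH H ^^ 1) T (0,u) (0,v) (0,w)) =
   snd (T (H u, 0) (0, v) (0, w)) + snd (T (0, u) (H v, 0) (0, w)) + snd (T (0, u) (0, v) (H w, 0))"
  by (simp add: snd_X)
lemma sX2: "snd ((XH H ^^ 2) T (0,u) (0,v) (0,w)) =
   (snd (T (H u, 0) (H v, 0) (0, w)) + snd (T (0, u) (H v, 0) (H w, 0)) + snd (T (H u, 0) (0, v) (H w, 0)))
 + (snd (T (H u, 0) (H v, 0) (0, w)) + snd (T (0, u) (H v, 0) (H w, 0)) + snd (T (H u, 0) (0, v) (H w, 0)))"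
  by (simp add: snd_X numeral_eq_Suc algebra_simps)
lemma sX3: "snd ((XH H ^^ 3) T (0,u) (0,v) (0,w)) = 0"
  by (simp add: snd_X numeral_eq_Suc G1)
lemma sX4: "snd ((XH H ^^ 4) T (0,u) (0,v) (0,w)) = 0"
  by (simp add: snd_X numeral_eq_Suc G1)
end

lemma X_zero_pow:
  assumes "\<And>x y. (H::'b::ab_group_add \<Rightarrow> 'a::ab_group_add) (x + y) = H x + H y"
  shows "(XH H ^^ m) (\<lambda>_ _ _. 0) = (\<lambda>_ _ _. (0::'a \<times> 'b))"
proof -
  have H0: "H 0 = 0" using assms[of 0 0] by simp
  have X0: "XH H (\<lambda>_ _ _. 0) = (\<lambda>_ _ _. (0::'a \<times> 'b))"
    by (intro ext) (simp add: XH_def lts_bracket_1_0_def circ_1_0_def circ_0_1_def hatH_def H0 zero_prod_def)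
  show ?thesis by (induction m) (simp_all add: X0)
qed

lemma half_double:
  fixes s :: "'k::field_char_0 \<Rightarrow> 'v::ab_group_add \<Rightarrow> 'v"
  assumes "vector_space s" shows "s (1 / 2) (x + x) = x"
proof -
  interpret vector_space s by fact
  have "x + x = s 2 x" using scale_left_distrib[of 1 1 x] by simp
  then show ?thesis by (simp add: scale_scale)
qed

lemma sum5: "(\<Sum>k<(5::nat). g k) = g 0 + g 1 + g 2 + g 3 + (g 4::'a::comm_monoid_add)"
  by (simp add: lessThan_nat_numeral add.commute add.left_commute)

lemma lin_parts:
  assumes "Vector_Spaces.linear s s f"
  shows "f (x + y) = f x + f y" "f (s c x) = s c (f x)"
  using assms unfolding Vector_Spaces.linear_iff by auto

theorem proposition4p7:
  fixes s1 :: "'k::field_char_0 \<Rightarrow> 'a::ab_group_add \<Rightarrow> 'a"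
    and s2 :: "'k \<Rightarrow> 'b::ab_group_add \<Rightarrow> 'b"
    and T :: "'a \<times> 'b \<Rightarrow> 'a \<times> 'b \<Rightarrow> 'a \<times> 'b \<Rightarrow> 'a \<times> 'b"
    and H :: "'b \<Rightarrow> 'a"
  assumes "vector_space s1" and "vector_space s2"
    and "Vector_Spaces.linear s2 s1 H"
    and "twilled s1 s2 T"
    and "twilled s1 s2 (twist s1 s2 H T)"
  shows "lie_triple_system s2 (bracket_H T H)"
proof -
  let ?s = "prod_scale s1 s2"
  define TW where "TW = twist s1 s2 H T"
  have ltsT: "lie_triple_system ?s T" and G1: "\<And>x y z. snd (T (x, 0) (y, 0) (z, 0)) = 0"
    using assms(4) unfolding twilled_def by auto
  have ltsW: "lie_triple_system ?s TW" and W2: "\<And>u v w. fst (TW (0, u) (0, v) (0, w)) = 0"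
    using assms(5) unfolding twilled_def TW_def by auto
  have HA: "\<And>x y. H (x + y) = H x + H y" using assms(3) unfolding Vector_Spaces.linear_iff by auto
  have trT: "trilinear ?s T" using ltsT unfolding lie_triple_system_def by auto
  interpret twd T H
  proof
    show "\<And>x y b c. T (x + y) b c = T x b c + T y b c"
      using trT unfolding trilinear_def by (meson lin_parts)
    show "\<And>x y a c. T a (x + y) c = T a x c + T a y c"
      using trT unfolding trilinear_def by (meson lin_parts)
    show "\<And>x y a b. T a b (x + y) = T a b x + T a b y"
      using trT unfolding trilinear_def by (meson lin_parts)
  qed (fact HA, fact G1)
  interpret v1: vector_space s1 by fact
  interpret v2: vector_space s2 by fact
  define N where "N = (LEAST n. (XH H ^^ n) T = (\<lambda>_ _ _. 0))"
  have hN: "(XH H ^^ N) T = (\<lambda>_ _ _. 0)" unfolding N_def by (rule LeastI[of _ 5]) (rule X5)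
  have N5: "N \<le> 5" unfolding N_def by (rule Least_le) (rule X5)
  have hk: "(XH H ^^ k) T = (\<lambda>_ _ _. 0)" if "N \<le> k" for k
  proof -
    have "k = (k - N) + N" using that by simp
    then have "(XH H ^^ k) T = (XH H ^^ (k - N)) ((XH H ^^ N) T)"
      by (metis funpow_add o_apply)
    then show ?thesis using hN X_zero_pow[OF HA] by simp
  qed
  have ps0: "prod_scale s1 s2 c 0 = 0" for c by (simp add: prod_scale_def zero_prod_def)
  have TWsum: "TW a b c = (\<Sum>k<5. ?s (inverse (of_nat (fact k))) ((XH H ^^ k) T a b c))" for a b c
  proof -
    have "TW a b c = (\<Sum>k<N. ?s (inverse (of_nat (fact k))) ((XH H ^^ k) T a b c))"
      unfolding TW_def twist_def N_def Let_def by simp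
    also have "\<dots> = (\<Sum>k<5. ?s (inverse (of_nat (fact k))) ((XH H ^^ k) T a b c))"
      by (rule sum.mono_neutral_left) (use N5 hk ps0 in auto)
    finally show ?thesis .
  qed
  have sndW: "snd (TW (0,u) (0,v) (0,w)) = bracket_H T H u v w" for u v w
  proof -
    have "snd (TW (0,u) (0,v) (0,w)) = (\<Sum>k<5. s2 (inverse (of_nat (fact k))) (snd ((XH H ^^ k) T (0,u) (0,v) (0,w))))"
      unfolding TWsum snd_sum by (simp add: prod_scale_def)
    also have "\<dots> = bracket_H T H u v w"
      unfolding sum5 sX0 sX1 sX2 sX3 sX4
      apply (simp add: half_double[OF assms(2)])
      apply (simp add: bracket_H_def add.assoc)
      done
    finally show ?thesis .
  qed
  have key: "TW (0,u) (0,v) (0,w) = (0, bracket_H T H u v w)" for u v w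
    using W2[of u v w] sndW[of u v w] by (simp add: prod_eq_iff)
  have trW: "trilinear ?s TW" using ltsW unfolding lie_triple_system_def by auto
  have W1: "\<And>x y b c. TW (x + y) b c = TW x b c + TW y b c"
       "\<And>x r b c. TW (?s r x) b c = ?s r (TW x b c)"
    using trW unfolding trilinear_def by (meson lin_parts)+
  have W2': "\<And>x y a c. TW a (x + y) c = TW a x c + TW a y c"
       "\<And>x r a c. TW a (?s r x) c = ?s r (TW a x c)"
    using trW unfolding trilinear_def by (meson lin_parts)+
  have W3: "\<And>x y a b. TW a b (x + y) = TW a b x + TW a b y"
       "\<And>x r a b. TW a b (?s r x) = ?s r (TW a b x)"
    using trW unfolding trilinear_def by (meson lin_parts)+
  have p0: "(0::'b) + 0 = 0" by simp
  have padd: "(0::'a, x + y) = (0, x) + (0, y)" for x y by simp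
  have psc: "(0::'a, s2 r x) = ?s r (0, x)" for r x by (simp add: prod_scale_def)
  have sndsc: "snd (?s r p) = s2 r (snd p)" for r p by (simp add: prod_scale_def)
  let ?B = "bracket_H T H"
  have Bdef: "?B u v w = snd (TW (0,u) (0,v) (0,w))" for u v w by (simp add: key zero_prod_def)
  have lin1: "Vector_Spaces.linear s2 s2 (\<lambda>x. ?B x y z)" for y z
    unfolding Vector_Spaces.linear_iff Bdef using assms(2)
    by (simp only: padd psc W1 sndsc snd_add simp_thms)
  have lin2: "Vector_Spaces.linear s2 s2 (\<lambda>y. ?B x y z)" for x z
    unfolding Vector_Spaces.linear_iff Bdef using assms(2)
    by (simp only: padd psc W2' sndsc snd_add simp_thms)
  have lin3: "Vector_Spaces.linear s2 s2 (\<lambda>z. ?B x y z)" for x y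
    unfolding Vector_Spaces.linear_iff Bdef using assms(2)
    by (simp only: padd psc W3 sndsc snd_add simp_thms)
  have ax1: "TW x x y = 0" and ax2: "TW x y z + TW y z x + TW z x y = 0"
    and ax3: "TW x y (TW z w t) = TW (TW x y z) w t + TW z (TW x y w) t + TW z w (TW x y t)"
    for x y z w t
    using ltsW unfolding lie_triple_system_def by blast+
  show ?thesis
    unfolding lie_triple_system_def trilinear_def
  proof (intro conjI allI)
    show "vector_space s2" by fact
  next
    fix x y show "?B x x y = 0" using ax1[of "(0,x)" "(0,y)"] by (simp add: key zero_prod_def)
  next
    fix x y z show "?B x y z + ?B y z x + ?B z x y = 0"
      using ax2[of "(0,x)" "(0,y)" "(0,z)"] by (simp add: key zero_prod_def)
  next
    fix x y z w t
    show "?B x y (?B z w t) = ?B (?B x y z) w t + ?B z (?B x y w) t + ?B z w (?B x y t)"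
      using ax3[of "(0,x)" "(0,y)" "(0,z)" "(0,w)" "(0,t)"] by (simp add: key zero_prod_def)
  qed (simp_all add: lin1 lin2 lin3)
qed

end
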